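(* Let $(\beta,\gamma)\in[0,\infty)\times[2,\infty)$ and $G\in\mathcal S_{\beta,\gamma}$. Then there exists $C>0$ such that for all $n\ge1$, $$\sup_{t\in[0,T]}\mathbb E_{\nu_b}\Big[\big(\langle\mathcal M^n(G)\rangle_t-\mathbb E_{\nu_b}[\langle\mathcal M^n(G)\rangle_t]\big)^2\Big]\le C,$$ where $\langle\mathcal M^n(G)\rangle_t=\int_0^t\frac{\Theta(n)}{n}\sum_{\{x,y\}\notin\mathcal S}p(x-y)[G(\tfrac yn)-G(\tfrac xn)]^2[\eta^n_s(y)-\eta^n_s(x)]^2ds+\int_0^t\alpha\Theta(n)n^{-1-\beta}\sum_{\{x,y\}\in\mathcal S}p(x-y)[G(\tfrac yn)-G(\tfrac xn)]^2[\eta^n_s(y)-\eta^n_s(x)]^2ds$ (sums over unordered pairs of distinct integers).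
   Context: Fix $\gamma\ge2$, $\alpha>0$, $\beta\ge0$, $b\in(0,1)$, $T>0$. Let $p(0)=0$, $p(x)=c_\gamma|x|^{-\gamma-1}$ ($x\ne0$), $c_\gamma$ normalizing; $m=\sum_{x\ge1}xp(x)$, $\sigma^2=\sum_xx^2p(x)$ when $\gamma>2$, $\kappa_\gamma=c_2$ if $\gamma=2$ and $\sigma^2/2$ if $\gamma>2$, $\hat\alpha=\alpha m/\kappa_\gamma$. Slow bonds $\mathcal S$: unordered pairs $\{x,y\}$ with $x\le-1$, $y\ge0$; rates $r^n_{x,y}=\alpha n^{-\beta}$ on slow bonds, $1$ otherwise. Exclusion process on $\{0,1\}^{\mathbb Z}$ with generator $\mathcal L_nf(\eta)=\sum_{x,y}p(y-x)\eta(x)(1-\eta(y))r^n_{x,y}[f(\eta^{x,y})-f(\eta)]$. $\Theta(n)=n^2$ if $\gamma>2$, $n^2/\log n$ if $\gamma=2$. $\eta^n_t=\eta_{t\Theta(n)}$ started from the Bernoulli product measure $\nu_b$ of density $b$; $\mathbb E_{\nu_b}$ is the corresponding expectation. Test functions: $G=\mathbb 1_{\{u<0\}}G_-+\mathbb 1_{\{u\ge0\}}G_+$ with $G_\pm$ Schwartz; $\mathcal S_{Neu}(\mathbb R^* )$: $G_\pm^{(2k+1)}(0)=0$ for all $k$; $\mathcal S_{Rob}(\mathbb R^* )$: $G_-^{(2k+1)}(0)=G_+^{(2k+1)}(0)=\hat\alpha[G_+^{(2k)}(0)-G_-^{(2k)}(0)]$ for all $k$. $\mathcal S_{\beta,\gamma}$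 is the Schwartz space $\mathcal S(\mathbb R)$ if $\beta<1$, $\mathcal S_{Rob}(\mathbb R^* )$ if $\beta=1,\gamma>2$, $\mathcal S_{Neu}(\mathbb R^* )$ otherwise. *)

theory Defs
  imports "HOL-Probability.Probability"
begin

definition c_gamma :: "real \<Rightarrow> real" where
  "c_gamma \<gamma> = inverse (infsum (\<lambda>h::int. \<bar>real_of_int h\<bar> powr (-\<gamma>-1)) (UNIV - {0}))"

definition pker :: "real \<Rightarrow> int \<Rightarrow> real" where
  "pker \<gamma> h = (if h = 0 then 0 else c_gamma \<gamma> * \<bar>real_of_int h\<bar> powr (-\<gamma>-1))"

definition mean_m :: "real \<Rightarrow> real" where
  "mean_m \<gamma> = infsum (\<lambda>x::int. real_of_int x * pker \<gamma> x) {1..}"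

definition sigma2 :: "real \<Rightarrow> real" where
  "sigma2 \<gamma> = infsum (\<lambda>x::int. (real_of_int x)^2 * pker \<gamma> x) UNIV"

definition kappa :: "real \<Rightarrow> real" where
  "kappa \<gamma> = (if \<gamma> = 2 then c_gamma 2 else sigma2 \<gamma> / 2)"

definition alpha_hat :: "real \<Rightarrow> real \<Rightarrow> real" where
  "alpha_hat \<alpha> \<gamma> = \<alpha> * mean_m \<gamma> / kappa \<gamma>"

definition Theta :: "real \<Rightarrow> nat \<Rightarrow> real" where
  "Theta \<gamma> n = (if \<gamma> > 2 then (real n)^2 else (real n)^2 / ln (real n))"

definition slow :: "int \<Rightarrow> int \<Rightarrow> bool" where
  "slow x y \<longleftrightarrow> (x \<le> -1 \<and> y \<ge> 0) \<or> (y \<le> -1 \<and> x \<ge> 0)"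

definition rate :: "real \<Rightarrow> real \<Rightarrow> nat \<Rightarrow> int \<Rightarrow> int \<Rightarrow> real" where
  "rate \<alpha> \<beta> n x y = (if slow x y then \<alpha> * real n powr (-\<beta>) else 1)"

definition swap_conf :: "(int \<Rightarrow> bool) \<Rightarrow> int \<Rightarrow> int \<Rightarrow> (int \<Rightarrow> bool)" where
  "swap_conf \<eta> x y = (\<lambda>z. if z = x then \<eta> y else if z = y then \<eta> x else \<eta> z)"

definition local_fun :: "((int \<Rightarrow> bool) \<Rightarrow> real) \<Rightarrow> bool" where
  "local_fun f \<longleftrightarrow> (\<exists>A. finite A \<and> (\<forall>\<eta> \<xi>. (\<forall>x\<in>A. \<eta> x = \<xi> x) \<longrightarrow> f \<eta> = f \<xi>))"

definition generator :: "real \<Rightarrow> real \<Rightarrow> real \<Rightarrow> nat \<Rightarrow> ((int \<Rightarrow> bool) \<Rightarrow> real) \<Rightarrow> (int \<Rightarrow> bool) \<Rightarrow> real" where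
  "generator \<alpha> \<beta> \<gamma> n f \<eta> =
     infsum (\<lambda>(x,y). pker \<gamma> (y - x) * of_bool (\<eta> x \<and> \<not> \<eta> y) * rate \<alpha> \<beta> n x y
                        * (f (swap_conf \<eta> x y) - f \<eta>)) UNIV"

definition nat_filtration :: "'w measure \<Rightarrow> ('w \<Rightarrow> real \<Rightarrow> int \<Rightarrow> bool) \<Rightarrow> real \<Rightarrow> 'w measure" where
  "nat_filtration M X s = sigma (space M) {{\<omega> \<in> space M. X \<omega> r x} | r x. 0 \<le> r \<and> r \<le> s}"

text \<open>X is a (cadlag) exclusion process with generator L_n started from the Bernoulli
  product measure of density b: it solves the martingale problem for L_n.\<close>
definition exclusion_process ::
  "real \<Rightarrow> real \<Rightarrow> real \<Rightarrow> real \<Rightarrow> nat \<Rightarrow> 'w measure \<Rightarrow> ('w \<Rightarrow> real \<Rightarrow> int \<Rightarrow> bool) \<Rightarrow> bool" where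
  "exclusion_process \<alpha> \<beta> \<gamma> b n M X \<longleftrightarrow>
     prob_space M
   \<and> (\<forall>t x. (\<lambda>\<omega>. X \<omega> t x) \<in> measurable M (count_space UNIV))
   \<and> (\<forall>x. (\<lambda>(\<omega>, t). X \<omega> t x) \<in> measurable (M \<Otimes>\<^sub>M lborel) (count_space UNIV))
   \<and> (\<forall>\<omega>\<in>space M. \<forall>x. \<forall>t\<ge>0. \<exists>\<delta>>0. \<forall>s\<in>{t..t+\<delta>}. X \<omega> s x = X \<omega> t x)
   \<and> (\<forall>\<omega>\<in>space M. \<forall>x. \<forall>t>0. \<exists>\<delta>>0. \<exists>v. \<forall>s\<in>{t-\<delta><..<t}. X \<omega> s x = v)
   \<and> (\<forall>A \<sigma>. finite A \<longrightarrow>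
        measure M {\<omega> \<in> space M. \<forall>x\<in>A. X \<omega> 0 x = \<sigma> x}
          = b ^ card {x\<in>A. \<sigma> x} * (1 - b) ^ card {x\<in>A. \<not> \<sigma> x})
   \<and> (\<forall>f s t H. local_fun f \<longrightarrow> 0 \<le> s \<longrightarrow> s \<le> t \<longrightarrow>
        H \<in> borel_measurable (nat_filtration M X s) \<longrightarrow>
        (\<exists>B. \<forall>\<omega>\<in>space M. \<bar>H \<omega>\<bar> \<le> B) \<longrightarrow>
        integral\<^sup>L M (\<lambda>\<omega>. (f (X \<omega> t) - f (X \<omega> s)
            - set_lebesgue_integral lborel {s..t} (\<lambda>r. generator \<alpha> \<beta> \<gamma> n f (X \<omega> r))) * H \<omega>) = 0)"

definition schwartz :: "(real \<Rightarrow> real) \<Rightarrow> bool" where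
  "schwartz g \<longleftrightarrow>
     (\<forall>m x. ((deriv ^^ m) g has_real_derivative (deriv ^^ Suc m) g x) (at x))
   \<and> (\<forall>k m. \<exists>B. \<forall>x. \<bar>x ^ k * (deriv ^^ m) g x\<bar> \<le> B)"

definition glue :: "(real \<Rightarrow> real) \<Rightarrow> (real \<Rightarrow> real) \<Rightarrow> real \<Rightarrow> real" where
  "glue Gm Gp u = (if u < 0 then Gm u else Gp u)"

definition S_Neu :: "(real \<Rightarrow> real) \<Rightarrow> (real \<Rightarrow> real) \<Rightarrow> bool" where
  "S_Neu Gm Gp \<longleftrightarrow> schwartz Gm \<and> schwartz Gp \<and>
     (\<forall>k. (deriv ^^ (2*k+1)) Gm 0 = 0 \<and> (deriv ^^ (2*k+1)) Gp 0 = 0)"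

definition S_Rob :: "real \<Rightarrow> (real \<Rightarrow> real) \<Rightarrow> (real \<Rightarrow> real) \<Rightarrow> bool" where
  "S_Rob ah Gm Gp \<longleftrightarrow> schwartz Gm \<and> schwartz Gp \<and>
     (\<forall>k. (deriv ^^ (2*k+1)) Gm 0 = ah * ((deriv ^^ (2*k)) Gp 0 - (deriv ^^ (2*k)) Gm 0)
        \<and> (deriv ^^ (2*k+1)) Gp 0 = ah * ((deriv ^^ (2*k)) Gp 0 - (deriv ^^ (2*k)) Gm 0))"

definition S_beta_gamma :: "real \<Rightarrow> real \<Rightarrow> real \<Rightarrow> (real \<Rightarrow> real) \<Rightarrow> (real \<Rightarrow> real) \<Rightarrow> bool" where
  "S_beta_gamma \<alpha> \<beta> \<gamma> Gm Gp \<longleftrightarrow>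
     (if \<beta> < 1 then schwartz Gm \<and> schwartz Gp \<and> schwartz (glue Gm Gp)
      else if \<beta> = 1 \<and> \<gamma> > 2 then S_Rob (alpha_hat \<alpha> \<gamma>) Gm Gp
      else S_Neu Gm Gp)"

definition qv :: "real \<Rightarrow> real \<Rightarrow> real \<Rightarrow> nat \<Rightarrow> (real \<Rightarrow> real) \<Rightarrow> (real \<Rightarrow> int \<Rightarrow> bool) \<Rightarrow> real \<Rightarrow> real" where
  "qv \<alpha> \<beta> \<gamma> n G eta t =
     set_lebesgue_integral lborel {0..t} (\<lambda>s. Theta \<gamma> n / real n *
        infsum (\<lambda>(x,y). pker \<gamma> (x - y) * (G (real_of_int y / real n) - G (real_of_int x / real n))^2
                          * (of_bool (eta s y) - of_bool (eta s x))^2) {(x,y). x < y \<and> \<not> slow x y})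
   + set_lebesgue_integral lborel {0..t} (\<lambda>s. \<alpha> * Theta \<gamma> n * real n powr (-1 - \<beta>) *
        infsum (\<lambda>(x,y). pker \<gamma> (x - y) * (G (real_of_int y / real n) - G (real_of_int x / real n))^2
                          * (of_bool (eta s y) - of_bool (eta s x))^2) {(x,y). x < y \<and> slow x y})"

end

theory Submission
  imports Defs "HOL-Analysis.Harmonic_Numbers"
begin


lemma phi_sum_sym:
  fixes n N :: nat assumes "n \<ge> 1"
  shows "(\<Sum>x\<in>{-int N..int N}. 1/(1+(real_of_int x / real n)^2)) \<le> 1 + 8*real n - 8*(real n)^2/(real n + real N + 1)"
proof (induction N)
  case 0
  have "8*(real n)^2/(real n + 1) \<le> 8 * real n" using assms by (simp add: field_simps power2_eq_square)
  then show ?case by simp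
next
  case (Suc N)
  have eq: "{-int (Suc N)..int (Suc N)} = insert (int N + 1) (insert (-(int N + 1)) {-int N..int N})" by auto
  define k where "k = real n + real N + 1"
  have k1: "k \<ge> 1" using assms unfolding k_def by simp
  have phi: "1/(1+(real_of_int (int N + 1) / real n)^2) \<le> 4*(real n)^2/(k*(k+1))"
  proof -
    have "1/(1+(real_of_int (int N + 1) / real n)^2) = (real n)^2/((real n)^2 + (real N + 1)^2)"
      using assms by (simp add: field_simps)
    also have "\<dots> \<le> 4*(real n)^2/(k*(k+1))"
    proof -
      have "k*(k+1) \<le> 2*k*k" using k1 by (simp add: algebra_simps)
      also have "\<dots> \<le> 4*((real n)^2 + (real N + 1)^2)"
        unfolding k_def using sum_squares_ge_zero[of "real n - (real N + 1)" 0]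
        by (simp add: power2_eq_square algebra_simps)
      finally have le: "k*(k+1) \<le> 4*((real n)^2 + (real N + 1)^2)" .
      have pos: "0 < k*(k+1)" using k1 by simp
      have "(real n)^2/((real n)^2 + (real N + 1)^2) = 4*(real n)^2/(4*((real n)^2 + (real N + 1)^2))"
        by (simp only: mult_divide_mult_cancel_left_if) simp
      also have "\<dots> \<le> 4*(real n)^2/(k*(k+1))"
      proof (rule divide_left_mono[OF le])
        have "0 < 4*((real n)^2 + (real N + 1)^2)" by (simp add: add_nonneg_pos)
        then show "0 < 4*((real n)^2 + (real N + 1)^2) * (k*(k+1))" using pos by simp
      qed simp
      finally show ?thesis .
    qed
    finally show ?thesis .
  qed
  have phi2: "1/(1+(real_of_int (-(int N + 1)) / real n)^2) = 1/(1+(real_of_int (int N + 1) / real n)^2)"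
    by (simp add: power2_eq_square algebra_simps)
  have tel: "8*(real n)^2/(k*(k+1)) = 8*(real n)^2/k - 8*(real n)^2/(k+1)" using k1 by (simp add: field_simps)
  have "(\<Sum>x\<in>{-int (Suc N)..int (Suc N)}. 1/(1+(real_of_int x / real n)^2))
     = 1/(1+(real_of_int (int N + 1) / real n)^2) + 1/(1+(real_of_int (-(int N + 1)) / real n)^2)
       + (\<Sum>x\<in>{-int N..int N}. 1/(1+(real_of_int x / real n)^2))"
    unfolding eq by (subst sum.insert; simp)+
  also have "\<dots> \<le> 8*(real n)^2/(k*(k+1)) + (1 + 8*real n - 8*(real n)^2/k)"
    using phi phi2 Suc.IH unfolding k_def by simp
  also have "\<dots> = 1 + 8*real n - 8*(real n)^2/(real n + real (Suc N) + 1)"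
    using tel by (simp add: k_def)
  finally show ?case .
qed

lemma phi_sum:
  fixes n :: nat and S :: "int set" assumes "n \<ge> 1" "finite S"
  shows "(\<Sum>x\<in>S. 1/(1+(real_of_int x / real n)^2)) \<le> 9 * real n"
proof -
  obtain N where N: "S \<subseteq> {-int N..int N}"
  proof -
    have "bdd_above (abs ` S)" using assms(2) by simp
    then obtain M where "\<forall>x\<in>S. \<bar>x\<bar> \<le> M" by (auto simp: bdd_above_def)
    then have "S \<subseteq> {-int (nat M)..int (nat M)}" by force
    then show ?thesis using that by blast
  qed
  have "(\<Sum>x\<in>S. 1/(1+(real_of_int x / real n)^2)) \<le> (\<Sum>x\<in>{-int N..int N}. 1/(1+(real_of_int x / real n)^2))"
    by (rule sum_mono2) (use N in \<open>auto intro: add_pos_nonneg\<close>)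
  also have "\<dots> \<le> 1 + 8*real n - 8*(real n)^2/(real n + real N + 1)" by (rule phi_sum_sym[OF assms(1)])
  also have "\<dots> \<le> 9 * real n"
  proof -
    have "0 \<le> 8*(real n)^2/(real n + real N + 1)" by simp
    moreover have "real n \<ge> 1" using assms(1) by simp
    ultimately show ?thesis by linarith
  qed
  finally show ?thesis .
qed

lemma tail_cube:
  fixes n H :: nat assumes "n \<ge> 1" "n \<le> H"
  shows "(\<Sum>h\<in>{n<..H}. 1/(real h)^3) \<le> 1/(real n)^2 - 1/(real H)^2"
  using assms(2)
proof (induction H rule: dec_induct)
  case base then show ?case by simp
next
  case (step m)
  have H1: "real m \<ge> 1" using step assms by simp
  have "1/(real m + 1)^3 \<le> 1/(real m)^2 - 1/(real m + 1)^2"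
  proof -
    have "1/(real m)^2 - 1/(real m + 1)^2 = (2*real m + 1)/((real m)^2 * (real m + 1)^2)"
      using H1 by (simp add: divide_simps) (simp add: algebra_simps power2_eq_square)
    moreover have "1/(real m + 1)^3 \<le> (2*real m + 1)/((real m)^2 * (real m + 1)^2)"
    proof -
      have "(real m)^2 * (real m + 1)^2 \<le> (2*real m + 1) * (real m + 1)^3"
        using H1 by (simp add: power2_eq_square power3_eq_cube algebra_simps)
      then show ?thesis using H1 by (simp add: divide_simps)
    qed
    ultimately show ?thesis by simp
  qed
  moreover have "{n<..Suc m} = insert (Suc m) {n<..m}" using step by auto
  ultimately show ?case using step.IH by (simp add: add_ac)
qed

lemma sum_inv_sq:
  fixes H :: nat
  shows "(\<Sum>h\<in>{1..H}. 1/(real h)^2) \<le> 2 - 2/(real H + 1)"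
proof (induction H)
  case 0 then show ?case by simp
next
  case (Suc H)
  have e: "2/(real H + 1) - 2/(real H + 2) = 2/((real H + 1)*(real H + 2))"
    by (simp add: divide_simps)
  have "1/(real H + 1)^2 \<le> 2/((real H + 1)*(real H + 2))"
    by (simp add: divide_simps power2_eq_square algebra_simps)
  then have "1/(real H + 1)^2 \<le> 2/(real H + 1) - 2/(real H + 2)" using e by simp
  then show ?case using Suc by (simp add: add_ac)
qed



lemma schwartz_bounds:
  assumes "schwartz g"
  shows "\<exists>D L. D \<ge> 0 \<and> L \<ge> 0 \<and> (\<forall>u. \<bar>g u\<bar> \<le> D/(1+u^2)) \<and> (\<forall>u. \<bar>deriv g u\<bar> \<le> L/(1+u^2))
           \<and> (\<forall>u. (g has_real_derivative deriv g u) (at u))"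
proof -
  have der: "\<forall>u. (g has_real_derivative deriv g u) (at u)"
  proof
    fix u
    have "((deriv^^0) g has_real_derivative (deriv^^Suc 0) g u) (at u)" using assms unfolding schwartz_def by blast
    then show "(g has_real_derivative deriv g u) (at u)" by simp
  qed
  have bd: "\<And>k m. \<exists>B. \<forall>x. \<bar>x ^ k * (deriv ^^ m) g x\<bar> \<le> B" using assms unfolding schwartz_def by blast
  have dec: "\<exists>D\<ge>0. \<forall>u. \<bar>f u\<bar> \<le> D/(1+u^2)" if h0: "\<exists>B. \<forall>x. \<bar>x ^ 0 * f x\<bar> \<le> B"
     and h2: "\<exists>B. \<forall>x. \<bar>x ^ 2 * f x\<bar> \<le> B" for f :: "real \<Rightarrow> real"
  proof -
    obtain B0 where B0: "\<forall>x. \<bar>x ^ 0 * f x\<bar> \<le> B0" using h0 by blast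
    obtain B2 where B2: "\<forall>x. \<bar>x ^ 2 * f x\<bar> \<le> B2" using h2 by blast
    have "\<bar>f u\<bar> \<le> (B0+B2)/(1+u^2)" for u
    proof -
      have "\<bar>f u\<bar> * (1+u^2) = \<bar>f u\<bar> + \<bar>u^2 * f u\<bar>" by (simp add: algebra_simps abs_mult)
      also have "\<dots> \<le> B0 + B2" using B0[rule_format, of u] B2[rule_format, of u] by simp
      finally show ?thesis by (simp add: field_simps add_pos_nonneg)
    qed
    moreover have "B0 \<ge> 0" "B2 \<ge> 0" using B0[rule_format, of 0] B2[rule_format, of 0] by auto
    ultimately show ?thesis by (intro exI[of _ "B0+B2"]) auto
  qed
  obtain D where D: "D \<ge> 0" "\<forall>u. \<bar>g u\<bar> \<le> D/(1+u^2)"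
    using dec[of g] bd[of 0 0] bd[of 2 0] by auto
  obtain L where L: "L \<ge> 0" "\<forall>u. \<bar>deriv g u\<bar> \<le> L/(1+u^2)"
    using dec[of "deriv g"] bd[of 0 1] bd[of 2 1] by auto
  show ?thesis using D L der by blast
qed

lemma row_bound:
  fixes g :: "real \<Rightarrow> real" and n h :: nat and S :: "int set"
  assumes D: "D \<ge> 0" "\<forall>u. \<bar>g u\<bar> \<le> D/(1+u^2)"
    and L: "L \<ge> 0" "\<forall>u. \<bar>deriv g u\<bar> \<le> L/(1+u^2)"
    and der: "\<forall>u. (g has_real_derivative deriv g u) (at u)"
    and n: "n \<ge> 1" and h: "h \<ge> 1" and S: "finite S"
  shows "(\<Sum>x\<in>S. (g ((real_of_int x + real h) / real n) - g (real_of_int x / real n))^2)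
           \<le> (81*L^2 + 36*D^2) * (if h \<le> n then (real h)^2 / real n else real n)"
proof (cases "h \<le> n")
  case True
  have pt: "(g ((real_of_int x + real h) / real n) - g (real_of_int x / real n))^2
        \<le> 9*L^2*(real h / real n)^2 * (1/(1+(real_of_int x / real n)^2))" for x
  proof -
    define a where "a = real_of_int x / real n"
    define b where "b = (real_of_int x + real h) / real n"
    have ba: "b - a = real h / real n" using n by (simp add: a_def b_def field_simps)
    have "real h / real n > 0" using n h by simp
    then have ab: "a < b" using ba by linarith
    have ba1: "b - a \<le> 1" using ba True n by simp
    obtain z where z: "a < z" "z < b" "g b - g a = (b - a) * deriv g z"
      using MVT2[OF ab, of g "deriv g"] der by blast
    have "1 + a^2 \<le> 3*(1+z^2)"
    proof -
      have "\<bar>a\<bar> \<le> \<bar>z\<bar> + 1" using z ba1 by auto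
      then have "a^2 \<le> (\<bar>z\<bar>+1)^2" by (metis abs_ge_zero abs_le_square_iff abs_of_nonneg add_nonneg_nonneg zero_le_one)
      also have "\<dots> \<le> 2*z^2 + 2" using sum_squares_ge_zero[of "\<bar>z\<bar> - 1" 0]
        by (simp add: power2_eq_square algebra_simps)
      finally have "a^2 \<le> 2*z^2 + 2" .
      moreover have "z^2 \<ge> 0" by simp
      ultimately show ?thesis by (simp only: distrib_left mult_1_right)
    qed
    then have "3*L/(3*(1+z^2)) \<le> 3*L/(1+a^2)"
      by (rule divide_left_mono) (use L(1) in \<open>auto intro!: mult_pos_pos add_pos_nonneg\<close>)
    moreover have "3*L/(3*(1+z^2)) = L/(1+z^2)" by (simp only: mult_divide_mult_cancel_left_if) simp
    ultimately have "L/(1+z^2) \<le> 3*L/(1+a^2)" by simp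
    then have dz: "\<bar>deriv g z\<bar> \<le> 3*L/(1+a^2)" using L(2) order_trans by blast
    have pa: "1 + a^2 > 0" by (simp add: add_pos_nonneg)
    have "(g b - g a)^2 = (b-a)^2 * (deriv g z)^2" using z by (simp add: power_mult_distrib)
    also have "\<dots> \<le> (b-a)^2 * (3*L/(1+a^2))^2"
    proof (intro mult_left_mono)
      have "\<bar>deriv g z\<bar>^2 \<le> (3*L/(1+a^2))^2" by (rule power_mono[OF dz]) simp
      then show "(deriv g z)^2 \<le> (3*L/(1+a^2))^2" by simp
    qed simp
    also have "\<dots> = 9*L^2*(b-a)^2 * (1/(1+a^2)) * (1/(1+a^2))" by (simp add: power2_eq_square field_simps)
    also have "\<dots> \<le> 9*L^2*(b-a)^2 * (1/(1+a^2)) * 1"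
      by (intro mult_left_mono) (use pa in auto)
    finally have "(g b - g a)^2 \<le> 9*L^2*(b-a)^2 * (1/(1+a^2)) * 1" .
    then have "(g b - g a)^2 \<le> 9*L^2*(real h / real n)^2 * (1/(1+a^2))" by (simp only: ba mult_1_right)
    then show ?thesis by (simp only: a_def b_def)
  qed
  have "(\<Sum>x\<in>S. (g ((real_of_int x + real h) / real n) - g (real_of_int x / real n))^2)
      \<le> (\<Sum>x\<in>S. 9*L^2*(real h / real n)^2 * (1/(1+(real_of_int x / real n)^2)))"
    by (intro sum_mono pt)
  also have "\<dots> = 9*L^2*(real h / real n)^2 * (\<Sum>x\<in>S. 1/(1+(real_of_int x / real n)^2))"
    by (simp add: sum_distrib_left)
  also have "\<dots> \<le> 9*L^2*(real h / real n)^2 * (9 * real n)"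
    by (intro mult_left_mono phi_sum n S) simp
  also have "\<dots> = 81*L^2 * ((real h)^2 / real n)" using n by (simp add: power2_eq_square field_simps)
  also have "\<dots> \<le> (81*L^2 + 36*D^2) * ((real h)^2 / real n)"
    by (intro mult_right_mono) auto
  finally show ?thesis using True by simp
next
  case False
  have sq: "(g u)^2 \<le> D^2 * (1/(1+u^2))" for u
  proof -
    have pa: "1 + u^2 > 0" by (simp add: add_pos_nonneg)
    have "(g u)^2 \<le> (D/(1+u^2))^2" using D(2) by (metis abs_ge_zero abs_le_square_iff order_trans abs_le_D1 abs_of_nonneg D(1) divide_nonneg_pos pa less_imp_le)
    also have "\<dots> = D^2 * (1/(1+u^2)) * (1/(1+u^2))" by (simp add: power2_eq_square field_simps)
    also have "\<dots> \<le> D^2 * (1/(1+u^2)) * 1" by (intro mult_left_mono) (use pa in auto)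
    finally show ?thesis by simp
  qed
  have pt: "(g ((real_of_int x + real h) / real n) - g (real_of_int x / real n))^2
        \<le> 2*D^2 * (1/(1+(real_of_int (x + int h) / real n)^2)) + 2*D^2 * (1/(1+(real_of_int x / real n)^2))" for x
  proof -
    have "(g ((real_of_int x + real h) / real n) - g (real_of_int x / real n))^2
       \<le> 2*(g ((real_of_int x + real h) / real n))^2 + 2*(g (real_of_int x / real n))^2"
      using sum_squares_ge_zero[of "g ((real_of_int x + real h) / real n) + g (real_of_int x / real n)" 0]
      by (simp add: power2_eq_square algebra_simps)
    also have "\<dots> \<le> 2*D^2 * (1/(1+(real_of_int (x + int h) / real n)^2)) + 2*D^2 * (1/(1+(real_of_int x / real n)^2))"
      using sq[of "(real_of_int x + real h) / real n"] sq[of "real_of_int x / real n"] by simp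
    finally show ?thesis .
  qed
  have sh: "(\<Sum>x\<in>S. 1/(1+(real_of_int (x + int h) / real n)^2)) \<le> 9 * real n"
  proof -
    have "(\<Sum>x\<in>S. 1/(1+(real_of_int (x + int h) / real n)^2)) = (\<Sum>z\<in>(\<lambda>x. x + int h) ` S. 1/(1+(real_of_int z / real n)^2))"
      by (subst sum.reindex) (auto simp: inj_on_def)
    also have "\<dots> \<le> 9 * real n" using phi_sum n S by blast
    finally show ?thesis .
  qed
  have "(\<Sum>x\<in>S. (g ((real_of_int x + real h) / real n) - g (real_of_int x / real n))^2)
      \<le> (\<Sum>x\<in>S. 2*D^2 * (1/(1+(real_of_int (x + int h) / real n)^2)) + 2*D^2 * (1/(1+(real_of_int x / real n)^2)))"
    by (intro sum_mono pt)
  also have "\<dots> = 2*D^2 * (\<Sum>x\<in>S. 1/(1+(real_of_int (x + int h) / real n)^2)) + 2*D^2 * (\<Sum>x\<in>S. 1/(1+(real_of_int x / real n)^2))"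
    by (simp add: sum.distrib sum_distrib_left)
  also have "\<dots> \<le> 2*D^2 * (9 * real n) + 2*D^2 * (9 * real n)"
    by (intro add_mono mult_left_mono sh phi_sum n S) auto
  also have "\<dots> = 36*D^2 * real n" by simp
  also have "\<dots> \<le> (81*L^2 + 36*D^2) * real n" by (intro mult_right_mono) auto
  finally show ?thesis using False by simp
qed



lemma c_gamma_nonneg: "c_gamma \<gamma> \<ge> 0"
  unfolding c_gamma_def by (simp add: infsum_nonneg)

lemma pker_nonneg: "pker \<gamma> h \<ge> 0"
  unfolding pker_def using c_gamma_nonneg by simp

lemma pker_neg_nat: "h \<ge> 1 \<Longrightarrow> pker \<gamma> (- int h) = c_gamma \<gamma> * real h powr (-\<gamma>-1)"
  unfolding pker_def by simp

lemma Theta_le: assumes "n \<ge> 1" shows "0 \<le> Theta \<gamma> n \<and> Theta \<gamma> n \<le> (1 + 1/ln 2) * (real n)^2"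
proof (cases "\<gamma> > 2")
  case True
  have "0 \<le> 1/ln (2::real)" by simp
  then have "1 * (real n)^2 \<le> (1 + 1/ln 2) * (real n)^2" by (intro mult_right_mono) auto
  then show ?thesis using True unfolding Theta_def by simp
next
  case False
  show ?thesis
  proof (cases "n = 1")
    case True then show ?thesis using False unfolding Theta_def by simp
  next
    case n1: False
    then have "real n \<ge> 2" using assms by simp
    then have l: "ln (real n) \<ge> ln 2" by simp
    have l2: "ln (2::real) > 0" by simp
    have "(real n)^2 / ln (real n) \<le> (real n)^2 / ln 2"
      using l2 l by (intro divide_left_mono[OF l] mult_pos_pos) (simp, linarith, simp)
    also have "\<dots> \<le> (1 + 1/ln 2) * (real n)^2" by (simp add: field_simps)
    finally have "(real n)^2 / ln (real n) \<le> (1 + 1/ln 2) * (real n)^2" .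
    moreover have "0 \<le> (real n)^2 / ln (real n)" using l l2 by (intro divide_nonneg_nonneg) (simp, linarith)
    ultimately show ?thesis using False unfolding Theta_def by simp
  qed
qed

lemma head_le:
  assumes "\<gamma> \<ge> 2"
  shows "\<exists>K1\<ge>0. \<forall>n::nat. n \<ge> 1 \<longrightarrow> Theta \<gamma> n * (\<Sum>h\<in>{1..n}. real h powr (1-\<gamma>)) \<le> K1 * (real n)^2"
proof (cases "\<gamma> > 2")
  case True
  have sm: "summable (\<lambda>h::nat. real h powr (1-\<gamma>))" using True by (subst summable_real_powr_iff) simp
  define Z where "Z = suminf (\<lambda>h::nat. real h powr (1-\<gamma>))"
  have Zb: "(\<Sum>h\<in>{1..n}. real h powr (1-\<gamma>)) \<le> Z" for n
    unfolding Z_def by (rule sum_le_suminf[OF sm]) auto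
  have "Z \<ge> 0" using Zb[of 0] by simp
  moreover have "Theta \<gamma> n * (\<Sum>h\<in>{1..n}. real h powr (1-\<gamma>)) \<le> Z * (real n)^2" for n
    using True mult_left_mono[OF Zb[of n], of "(real n)^2"] unfolding Theta_def by (simp add: mult.commute)
  ultimately show ?thesis by blast
next
  case False
  then have g2: "\<gamma> = 2" using assms by simp
  have "Theta \<gamma> n * (\<Sum>h\<in>{1..n}. real h powr (1-\<gamma>)) \<le> (1 + 1/ln 2) * (real n)^2" if n: "n \<ge> 1" for n
  proof -
    have sh: "(\<Sum>h\<in>{1..n}. real h powr (1-\<gamma>)) = harm n"
      unfolding harm_def g2 by (intro sum.cong) (auto simp: powr_minus_divide divide_inverse)
    have hb: "harm n \<le> 1 + ln (real n)"
      using euler_mascheroni_sequence_decreasing[of 1 n] n by (simp add: harm_def)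
    show ?thesis
    proof (cases "n = 1")
      case True then show ?thesis using g2 unfolding Theta_def by (simp add: add_nonneg_nonneg)
    next
      case False
      then have "real n \<ge> 2" using n by simp
      then have l: "ln (real n) \<ge> ln 2" by simp
      have l2: "ln (2::real) > 0" by simp
      have lp: "ln (real n) > 0" using l l2 by linarith
      have "Theta \<gamma> n * (\<Sum>h\<in>{1..n}. real h powr (1-\<gamma>)) = (real n)^2 / ln (real n) * harm n"
        using g2 sh unfolding Theta_def by simp
      also have "\<dots> \<le> (real n)^2 / ln (real n) * (1 + ln (real n))"
        by (intro mult_left_mono hb) (use lp in simp)
      also have "\<dots> = (real n)^2 / ln (real n) + (real n)^2" using lp by (simp add: field_simps)
      also have "(real n)^2 / ln (real n) \<le> (real n)^2 / ln 2"
        using l2 l by (intro divide_left_mono[OF l] mult_pos_pos) (simp, linarith, simp)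
      finally show ?thesis by (simp add: field_simps)
    qed
  qed
  then show ?thesis by (intro exI[of _ "1 + 1/ln 2"]) (simp add: add_nonneg_nonneg)
qed

lemma tail_powr:
  fixes n M :: nat assumes "n \<ge> 1" "\<gamma> \<ge> 2"
  shows "(\<Sum>h\<in>{n<..M}. real h powr (-\<gamma>-1)) \<le> 1/(real n)^2"
proof -
  have "(\<Sum>h\<in>{n<..M}. real h powr (-\<gamma>-1)) \<le> (\<Sum>h\<in>{n<..M}. 1/(real h)^3)"
  proof (rule sum_mono)
    fix h assume "h \<in> {n<..M}"
    then have h1: "real h \<ge> 1" using assms by simp
    have "real h powr (-\<gamma>-1) \<le> real h powr (-3)" by (rule powr_mono) (use assms h1 in auto)
    also have "\<dots> = 1/(real h)^3" using h1 by (simp add: powr_minus_divide powr_numeral)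
    finally show "real h powr (-\<gamma>-1) \<le> 1/(real h)^3" .
  qed
  also have "\<dots> \<le> 1/(real n)^2"
  proof (cases "n \<le> M")
    case True
    have "0 \<le> 1/(real M)^2" by simp
    then show ?thesis using tail_cube[OF assms(1) True] by linarith
  next
    case False then show ?thesis by simp
  qed
  finally show ?thesis .
qed



lemma powr_sq_aux: "real h \<ge> 1 \<Longrightarrow> real h powr (-\<gamma>-1) * (real h)^2 = real h powr (1-\<gamma>)"
proof -
  assume h: "real h \<ge> 1"
  have "(real h)^2 = real h powr 2" using h by (simp add: powr_numeral)
  then have "real h powr (-\<gamma>-1) * (real h)^2 = real h powr (-\<gamma>-1) * real h powr 2" by simp
  also have "\<dots> = real h powr (-\<gamma>-1 + 2)" by (rule powr_add[symmetric])
  also have "-\<gamma>-1+2 = 1-\<gamma>" by simp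
  finally show ?thesis .
qed

lemma core:
  assumes sg: "schwartz g" and g2: "\<gamma> \<ge> 2"
  shows "\<exists>K. \<forall>n::nat. n \<ge> 1 \<longrightarrow> (\<forall>F. finite F \<longrightarrow> F \<subseteq> {(x,y). x < y} \<longrightarrow>
     Theta \<gamma> n * (\<Sum>(x,y)\<in>F. pker \<gamma> (x - y) * (g (real_of_int y / real n) - g (real_of_int x / real n))^2) \<le> K * real n)"
proof -
  obtain D L where D: "D \<ge> 0" "\<forall>u. \<bar>g u\<bar> \<le> D/(1+u^2)" and L: "L \<ge> 0" "\<forall>u. \<bar>deriv g u\<bar> \<le> L/(1+u^2)"
    and der: "\<forall>u. (g has_real_derivative deriv g u) (at u)"
    using schwartz_bounds[OF sg] by blast
  obtain K1 where K1: "K1 \<ge> 0" "\<forall>n::nat. n \<ge> 1 \<longrightarrow> Theta \<gamma> n * (\<Sum>h\<in>{1..n}. real h powr (1-\<gamma>)) \<le> K1 * (real n)^2"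
    using head_le[OF g2] by blast
  define R where "R = 81*L^2 + 36*D^2"
  define c where "c = c_gamma \<gamma>"
  have c0: "c \<ge> 0" unfolding c_def by (rule c_gamma_nonneg)
  have R0: "R \<ge> 0" unfolding R_def by simp
  define \<theta> where "\<theta> = 1 + 1/ln (2::real)"
  show ?thesis
  proof (intro exI[of _ "c*R*K1 + c*R*\<theta>"] allI impI)
    fix n :: nat and F :: "(int \<times> int) set"
    assume n: "n \<ge> 1" and F: "finite F" and Fs: "F \<subseteq> {(x,y). x < y}"
    define q where "q = (\<lambda>h::nat. c * real h powr (-\<gamma>-1) * R * (if h \<le> n then (real h)^2 / real n else real n))"
    define T where "T = (\<lambda>(x::int,y::int). pker \<gamma> (x - y) * (g (real_of_int y / real n) - g (real_of_int x / real n))^2)"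
    have T0: "T p \<ge> 0" for p unfolding T_def by (auto simp: pker_nonneg split: prod.splits)
    obtain N :: nat where N: "\<forall>(x,y)\<in>F. \<bar>x\<bar> \<le> int N \<and> \<bar>y\<bar> \<le> int N"
    proof -
      have "bdd_above ((\<lambda>(x,y). \<bar>x\<bar> + \<bar>y\<bar>) ` F)" using F by simp
      then obtain M where "\<forall>p\<in>F. (\<lambda>(x,y). \<bar>x\<bar> + \<bar>y\<bar>) p \<le> M" by (auto simp: bdd_above_def)
      then have "\<forall>(x,y)\<in>F. \<bar>x\<bar> \<le> int (nat M) \<and> \<bar>y\<bar> \<le> int (nat M)" by (auto split: prod.splits; fastforce)
      then show ?thesis using that by blast
    qed
    define \<phi> where "\<phi> = (\<lambda>(h::nat, x::int). (x, x + int h))"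
    define A where "A = {1..2*N} \<times> {-int N..int N}"
    have FA: "F \<subseteq> \<phi> ` A"
    proof
      fix p assume p: "p \<in> F"
      obtain x y where xy: "p = (x,y)" by (cases p)
      have "x < y" "\<bar>x\<bar> \<le> int N" "\<bar>y\<bar> \<le> int N" using p xy Fs N by auto
      then have "(nat (y - x), x) \<in> A" "\<phi> (nat (y - x), x) = p" unfolding A_def \<phi>_def xy by auto
      then show "p \<in> \<phi> ` A" by force
    qed
    have inj: "inj_on \<phi> A" unfolding \<phi>_def inj_on_def by auto
    have "sum T F \<le> sum T (\<phi> ` A)"
      by (rule sum_mono2[OF finite_imageI FA T0]) (simp add: A_def)
    also have "\<dots> = sum (T \<circ> \<phi>) A" by (rule sum.reindex[OF inj])
    also have "\<dots> = (\<Sum>h\<in>{1..2*N}. \<Sum>x\<in>{-int N..int N}. (T \<circ> \<phi>) (h, x))"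
      by (subst sum.cartesian_product) (simp add: case_prod_unfold A_def)
    also have "\<dots> = (\<Sum>h\<in>{1..2*N}. pker \<gamma> (- int h) * (\<Sum>x\<in>{-int N..int N}. (g ((real_of_int x + real h) / real n) - g (real_of_int x / real n))^2))"
      by (intro sum.cong refl) (simp add: T_def \<phi>_def sum_distrib_left)
    also have "\<dots> \<le> (\<Sum>h\<in>{1..2*N}. c * real h powr (-\<gamma>-1) * R * (if h \<le> n then (real h)^2 / real n else real n))"
    proof (rule sum_mono)
      fix h assume h: "h \<in> {1..2*N}"
      then have h1: "h \<ge> 1" by simp
      have "pker \<gamma> (- int h) * (\<Sum>x\<in>{-int N..int N}. (g ((real_of_int x + real h) / real n) - g (real_of_int x / real n))^2)
          \<le> pker \<gamma> (- int h) * (R * (if h \<le> n then (real h)^2 / real n else real n))"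
        by (intro mult_left_mono pker_nonneg) (unfold R_def, rule row_bound[OF D L der n h1], simp)
      then show "pker \<gamma> (- int h) * (\<Sum>x\<in>{-int N..int N}. (g ((real_of_int x + real h) / real n) - g (real_of_int x / real n))^2)
          \<le> c * real h powr (-\<gamma>-1) * R * (if h \<le> n then (real h)^2 / real n else real n)"
        using pker_neg_nat[OF h1] unfolding c_def by (simp add: mult.assoc)
    qed
    also have "\<dots> \<le> (\<Sum>h\<in>{1..max (2*N) n}. c * real h powr (-\<gamma>-1) * R * (if h \<le> n then (real h)^2 / real n else real n))"
      by (rule sum_mono2) (auto intro!: mult_nonneg_nonneg divide_nonneg_nonneg c0 R0)
    finally have S1: "sum T F \<le> (\<Sum>h\<in>{1..max (2*N) n}. q h)" unfolding q_def .
    have S2: "(\<Sum>h\<in>{1..max (2*N) n}. q h) = (\<Sum>h\<in>{1..n}. q h) + (\<Sum>h\<in>{n<..max (2*N) n}. q h)"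
    proof -
      have "{1..max (2*N) n} = {1..n} \<union> {n<..max (2*N) n}" using n by auto
      then show ?thesis by (simp add: sum.union_disjoint ivl_disj_int)
    qed
    have S3: "(\<Sum>h\<in>{1..n}. q h) = c * R / real n * (\<Sum>h\<in>{1..n}. real h powr (1-\<gamma>))"
    proof -
      have "(\<Sum>h\<in>{1..n}. q h) = (\<Sum>h\<in>{1..n}. c * R / real n * real h powr (1-\<gamma>))"
      proof (rule sum.cong)
        fix h assume "h \<in> {1..n}"
        then have h1: "real h \<ge> 1" and "h \<le> n" by auto
        then have "q h = c * R / real n * (real h powr (-\<gamma>-1) * (real h)^2)" unfolding q_def by simp
        then show "q h = c * R / real n * real h powr (1-\<gamma>)" using powr_sq_aux[OF h1, of \<gamma>] by simp
      qed simp
      then show ?thesis by (simp add: sum_distrib_left)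
    qed
    have S4: "(\<Sum>h\<in>{n<..max (2*N) n}. q h) = c * R * real n * (\<Sum>h\<in>{n<..max (2*N) n}. real h powr (-\<gamma>-1))"
      unfolding q_def sum_distrib_left by (intro sum.cong) auto
    have S5: "c * R * real n * (\<Sum>h\<in>{n<..max (2*N) n}. real h powr (-\<gamma>-1)) \<le> c * R * real n * (1/(real n)^2)"
      by (intro mult_left_mono tail_powr n g2) (use c0 R0 in auto)
    have S6: "c * R * real n * (1/(real n)^2) = c * R / real n" using n by (simp add: power2_eq_square)
    have Sb: "sum T F \<le> c * R / real n * (\<Sum>h\<in>{1..n}. real h powr (1-\<gamma>)) + c * R / real n"
      using S1 S2 S3 S4 S5 S6 by linarith
    have Th: "0 \<le> Theta \<gamma> n" "Theta \<gamma> n \<le> \<theta> * (real n)^2" using Theta_le[OF n] unfolding \<theta>_def by auto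
    have "Theta \<gamma> n * sum T F \<le> Theta \<gamma> n * (c * R / real n * (\<Sum>h\<in>{1..n}. real h powr (1-\<gamma>)) + c * R / real n)"
      by (rule mult_left_mono[OF Sb Th(1)])
    also have "\<dots> = c * R / real n * (Theta \<gamma> n * (\<Sum>h\<in>{1..n}. real h powr (1-\<gamma>))) + c * R / real n * Theta \<gamma> n"
      by (simp add: distrib_left mult_ac)
    also have "\<dots> \<le> c * R / real n * (K1 * (real n)^2) + c * R / real n * (\<theta> * (real n)^2)"
      by (intro add_mono mult_left_mono Th K1(2)[rule_format, OF n]) (use c0 R0 in auto)
    also have "\<dots> = (c*R*K1 + c*R*\<theta>) * real n" using n by (simp add: power2_eq_square divide_simps algebra_simps)
    finally show "Theta \<gamma> n * (\<Sum>(x,y)\<in>F. pker \<gamma> (x - y) * (g (real_of_int y / real n) - g (real_of_int x / real n))^2) \<le> (c*R*K1 + c*R*\<theta>) * real n"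
      unfolding T_def .
  qed
qed



lemma set_int_bound:
  fixes f :: "real \<Rightarrow> real"
  assumes "\<And>s. 0 \<le> f s" "\<And>s. f s \<le> K" "0 \<le> t"
  shows "\<bar>set_lebesgue_integral lborel {0..t} f\<bar> \<le> K * t"
proof -
  have K0: "0 \<le> K" using assms(1,2) order_trans by blast
  have int: "integrable lborel (\<lambda>x. K * indicator {0..t} x)"
    by (intro integrable_mult_right integrable_real_indicator) (auto simp: emeasure_lborel_Icc_eq)
  have nn: "0 \<le> set_lebesgue_integral lborel {0..t} f"
    unfolding set_lebesgue_integral_def by (intro integral_nonneg_AE AE_I2) (simp add: indicator_def assms(1))
  have "set_lebesgue_integral lborel {0..t} f \<le> (\<integral>x. K * indicator {0..t} x \<partial>lborel)"
    unfolding set_lebesgue_integral_def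
    by (rule integral_mono'[OF int]) (use assms K0 in \<open>auto simp: indicator_def\<close>)
  also have "\<dots> = K * t" using assms(3) by simp
  finally show ?thesis using nn by simp
qed

lemma prob_int_abs_bound:
  fixes f :: "'a \<Rightarrow> real"
  assumes "prob_space M" "\<And>x. x \<in> space M \<Longrightarrow> \<bar>f x\<bar> \<le> K" "0 \<le> K"
  shows "\<bar>integral\<^sup>L M f\<bar> \<le> K"
proof (cases "integrable M f")
  case True
  have "integral\<^sup>L M f \<le> K"
    by (rule prob_space.integral_le_const[OF assms(1) True]) (use assms(2) in \<open>auto simp: abs_le_iff\<close>)
  moreover have "-K \<le> integral\<^sup>L M f"
  proof (rule prob_space.integral_ge_const[OF assms(1) True])
    show "AE x in M. - K \<le> f x" using assms(2) by (intro AE_I2) (fastforce simp: abs_le_iff)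
  qed
  ultimately show ?thesis by simp
next
  case False then show ?thesis using assms(3) by (simp add: not_integrable_integral_eq)
qed

lemma infsum_scaled_bound:
  fixes f :: "'a \<Rightarrow> real"
  assumes "\<And>p. p \<in> A \<Longrightarrow> 0 \<le> f p" "0 \<le> a" "0 \<le> B"
    and "\<And>F. finite F \<Longrightarrow> F \<subseteq> A \<Longrightarrow> a * sum f F \<le> B"
  shows "0 \<le> a * infsum f A \<and> a * infsum f A \<le> B"
proof -
  have i0: "0 \<le> infsum f A" using assms(1) by (rule infsum_nonneg)
  show ?thesis
  proof (cases "a = 0")
    case True then show ?thesis using assms by simp
  next
    case False
    then have ap: "a > 0" using assms(2) by simp
    have "infsum f A \<le> B / a"
    proof (cases "f summable_on A")
      case True
      show ?thesis
      proof (rule infsum_le_finite_sums[OF True])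
        fix F assume "finite F" "F \<subseteq> A"
        then have "a * sum f F \<le> B" by (rule assms(4))
        then show "sum f F \<le> B / a" using ap by (simp add: field_simps)
      qed
    next
      case False then show ?thesis using assms ap by (simp add: infsum_not_exists)
    qed
    then have "a * infsum f A \<le> B" using ap by (simp add: field_simps)
    then show ?thesis using i0 ap by simp
  qed
qed



lemma slow_count:
  assumes g2: "\<gamma> \<ge> 2" and F: "finite F" and Fs: "F \<subseteq> {(x,y). x < y \<and> slow x y}"
  shows "(\<Sum>(x,y)\<in>F. pker \<gamma> (x - y)) \<le> 2 * c_gamma \<gamma>"
proof -
  define c where "c = c_gamma \<gamma>"
  have c0: "c \<ge> 0" unfolding c_def by (rule c_gamma_nonneg)
  define T where "T = (\<lambda>(x::int,y::int). pker \<gamma> (x - y))"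
  have T0: "T p \<ge> 0" for p unfolding T_def by (auto simp: pker_nonneg split: prod.splits)
  obtain N :: nat where N: "\<forall>(x,y)\<in>F. \<bar>x\<bar> \<le> int N \<and> \<bar>y\<bar> \<le> int N"
  proof -
    have "bdd_above ((\<lambda>(x,y). \<bar>x\<bar> + \<bar>y\<bar>) ` F)" using F by simp
    then obtain M where "\<forall>p\<in>F. (\<lambda>(x,y). \<bar>x\<bar> + \<bar>y\<bar>) p \<le> M" by (auto simp: bdd_above_def)
    then have "\<forall>(x,y)\<in>F. \<bar>x\<bar> \<le> int (nat M) \<and> \<bar>y\<bar> \<le> int (nat M)" by (auto split: prod.splits; fastforce)
    then show ?thesis using that by blast
  qed
  define \<psi> where "\<psi> = (\<lambda>(h::nat, k::nat). (- int k, int h - int k))"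
  define A where "A = (SIGMA h:{1..2*N}. {1..h})"
  have FA: "F \<subseteq> \<psi> ` A"
  proof
    fix p assume p: "p \<in> F"
    obtain x y where xy: "p = (x,y)" by (cases p)
    have "x < y" "slow x y" "\<bar>x\<bar> \<le> int N" "\<bar>y\<bar> \<le> int N" using p xy Fs N by auto
    then have "x \<le> -1" "y \<ge> 0" "\<bar>x\<bar> \<le> int N" "\<bar>y\<bar> \<le> int N" unfolding slow_def by auto
    then have "(nat (y - x), nat (-x)) \<in> A" "\<psi> (nat (y - x), nat (-x)) = p" unfolding A_def \<psi>_def xy by auto
    then show "p \<in> \<psi> ` A" by force
  qed
  have inj: "inj_on \<psi> A" unfolding \<psi>_def inj_on_def by auto
  have finA: "finite A" unfolding A_def by auto
  have "sum T F \<le> sum T (\<psi> ` A)"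
    by (rule sum_mono2[OF finite_imageI[OF finA] FA T0])
  also have "\<dots> = sum (T \<circ> \<psi>) A" by (rule sum.reindex[OF inj])
  also have "\<dots> = (\<Sum>h\<in>{1..2*N}. \<Sum>k\<in>{1..h}. (T \<circ> \<psi>) (h, k))"
    unfolding A_def by (subst sum.Sigma) (auto simp: case_prod_unfold)
  also have "\<dots> = (\<Sum>h\<in>{1..2*N}. real h * pker \<gamma> (- int h))"
    by (intro sum.cong refl) (simp add: T_def \<psi>_def)
  also have "\<dots> \<le> (\<Sum>h\<in>{1..2*N}. c * (1/(real h)^2))"
  proof (rule sum_mono)
    fix h assume "h \<in> {1..2*N}"
    then have h1: "h \<ge> 1" and rh: "real h \<ge> 1" by auto
    have "real h * real h powr (-\<gamma>-1) = real h powr 1 * real h powr (-\<gamma>-1)" using rh by simp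
    also have "\<dots> = real h powr (1 + (-\<gamma>-1))" by (rule powr_add[symmetric])
    also have "\<dots> = real h powr (-\<gamma>)" by simp
    also have "\<dots> \<le> real h powr (-2)" by (rule powr_mono) (use g2 rh in auto)
    also have "\<dots> = 1/(real h)^2" using rh by (simp add: powr_minus_divide powr_numeral)
    finally have "real h * real h powr (-\<gamma>-1) \<le> 1/(real h)^2" .
    then have "c * (real h * real h powr (-\<gamma>-1)) \<le> c * (1/(real h)^2)" by (rule mult_left_mono[OF _ c0])
    then show "real h * pker \<gamma> (- int h) \<le> c * (1/(real h)^2)"
      using pker_neg_nat[OF h1, of \<gamma>] unfolding c_def by (simp add: mult_ac)
  qed
  also have "\<dots> = c * (\<Sum>h\<in>{1..2*N}. 1/(real h)^2)" by (simp add: sum_distrib_left)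
  also have "\<dots> \<le> c * 2"
  proof (rule mult_left_mono[OF _ c0])
    have "0 \<le> 2/(real (2*N) + 1)" by simp
    then show "(\<Sum>h\<in>{1..2*N}. 1/(real h)^2) \<le> 2" using sum_inv_sq[of "2*N"] by linarith
  qed
  finally show ?thesis unfolding T_def c_def by (simp add: mult.commute)
qed



lemma glue_neg: "y < 0 \<Longrightarrow> n \<ge> 1 \<Longrightarrow> glue Gm Gp (real_of_int y / real n) = Gm (real_of_int y / real n)"
  unfolding glue_def by (simp add: divide_neg_pos)

lemma glue_pos: "0 \<le> x \<Longrightarrow> glue Gm Gp (real_of_int x / real n) = Gp (real_of_int x / real n)"
proof -
  assume "0 \<le> x"
  then have "\<not> real_of_int x / real n < 0" by (simp add: not_less)
  then show ?thesis unfolding glue_def by simp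
qed

lemma ns_bound:
  fixes n :: nat and w :: "int \<Rightarrow> int \<Rightarrow> real"
  assumes Km: "\<And>F. finite F \<Longrightarrow> F \<subseteq> {(x,y). x < y} \<Longrightarrow>
      Theta \<gamma> n * (\<Sum>(x,y)\<in>F. pker \<gamma> (x - y) * (Gm (real_of_int y / real n) - Gm (real_of_int x / real n))^2) \<le> Km * real n"
    and Kp: "\<And>F. finite F \<Longrightarrow> F \<subseteq> {(x,y). x < y} \<Longrightarrow>
      Theta \<gamma> n * (\<Sum>(x,y)\<in>F. pker \<gamma> (x - y) * (Gp (real_of_int y / real n) - Gp (real_of_int x / real n))^2) \<le> Kp * real n"
    and n: "n \<ge> 1" and F: "finite F" and Fs: "F \<subseteq> {(x,y). x < y \<and> \<not> slow x y}"
    and w: "\<And>x y. 0 \<le> w x y \<and> w x y \<le> 1" and Th: "0 \<le> Theta \<gamma> n"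
  shows "Theta \<gamma> n / real n * (\<Sum>(x,y)\<in>F. pker \<gamma> (x - y) * (glue Gm Gp (real_of_int y / real n) - glue Gm Gp (real_of_int x / real n))^2 * w x y) \<le> Km + Kp"
proof -
  have F2: "F \<subseteq> {(x,y). x < y}" using Fs by auto
  have pt: "pker \<gamma> (x - y) * (glue Gm Gp (real_of_int y / real n) - glue Gm Gp (real_of_int x / real n))^2 * w x y
      \<le> pker \<gamma> (x - y) * (Gm (real_of_int y / real n) - Gm (real_of_int x / real n))^2
        + pker \<gamma> (x - y) * (Gp (real_of_int y / real n) - Gp (real_of_int x / real n))^2" if xy: "(x,y) \<in> F" for x y
  proof -
    have p0: "0 \<le> pker \<gamma> (x - y)" by (rule pker_nonneg)
    have "pker \<gamma> (x - y) * (glue Gm Gp (real_of_int y / real n) - glue Gm Gp (real_of_int x / real n))^2 * w x y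
        \<le> pker \<gamma> (x - y) * (glue Gm Gp (real_of_int y / real n) - glue Gm Gp (real_of_int x / real n))^2 * 1"
      by (intro mult_left_mono) (use w p0 in auto)
    moreover have "x < y" "\<not> slow x y" using xy Fs by auto
    then have "(y < 0) \<or> (0 \<le> x)" unfolding slow_def by auto
    moreover have "0 \<le> pker \<gamma> (x - y) * (Gm (real_of_int y / real n) - Gm (real_of_int x / real n))^2" using p0 by simp
    moreover have "0 \<le> pker \<gamma> (x - y) * (Gp (real_of_int y / real n) - Gp (real_of_int x / real n))^2" using p0 by simp
    ultimately show ?thesis using glue_neg[OF _ n, of y Gm Gp] glue_neg[OF _ n, of x Gm Gp]
        glue_pos[of x Gm Gp n] glue_pos[of y Gm Gp n] \<open>x < y\<close> by auto
  qed
  have "(\<Sum>(x,y)\<in>F. pker \<gamma> (x - y) * (glue Gm Gp (real_of_int y / real n) - glue Gm Gp (real_of_int x / real n))^2 * w x y)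
      \<le> (\<Sum>(x,y)\<in>F. pker \<gamma> (x - y) * (Gm (real_of_int y / real n) - Gm (real_of_int x / real n))^2
        + pker \<gamma> (x - y) * (Gp (real_of_int y / real n) - Gp (real_of_int x / real n))^2)"
    by (rule sum_mono) (use pt in auto)
  also have "\<dots> = (\<Sum>(x,y)\<in>F. pker \<gamma> (x - y) * (Gm (real_of_int y / real n) - Gm (real_of_int x / real n))^2)
        + (\<Sum>(x,y)\<in>F. pker \<gamma> (x - y) * (Gp (real_of_int y / real n) - Gp (real_of_int x / real n))^2)"
    by (simp add: sum.distrib case_prod_unfold)
  finally have S: "(\<Sum>(x,y)\<in>F. pker \<gamma> (x - y) * (glue Gm Gp (real_of_int y / real n) - glue Gm Gp (real_of_int x / real n))^2 * w x y)
      \<le> (\<Sum>(x,y)\<in>F. pker \<gamma> (x - y) * (Gm (real_of_int y / real n) - Gm (real_of_int x / real n))^2)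
        + (\<Sum>(x,y)\<in>F. pker \<gamma> (x - y) * (Gp (real_of_int y / real n) - Gp (real_of_int x / real n))^2)" .
  have "Theta \<gamma> n * (\<Sum>(x,y)\<in>F. pker \<gamma> (x - y) * (glue Gm Gp (real_of_int y / real n) - glue Gm Gp (real_of_int x / real n))^2 * w x y)
     \<le> Theta \<gamma> n * ((\<Sum>(x,y)\<in>F. pker \<gamma> (x - y) * (Gm (real_of_int y / real n) - Gm (real_of_int x / real n))^2)
        + (\<Sum>(x,y)\<in>F. pker \<gamma> (x - y) * (Gp (real_of_int y / real n) - Gp (real_of_int x / real n))^2))"
    by (rule mult_left_mono[OF S Th])
  also have "\<dots> \<le> Km * real n + Kp * real n"
    unfolding distrib_left by (intro add_mono Km Kp F F2)
  finally have "Theta \<gamma> n * (\<Sum>(x,y)\<in>F. pker \<gamma> (x - y) * (glue Gm Gp (real_of_int y / real n) - glue Gm Gp (real_of_int x / real n))^2 * w x y)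
     \<le> (Km + Kp) * real n" by (simp add: algebra_simps)
  then show ?thesis using n by (simp add: field_simps)
qed



lemma w_bound: "0 \<le> (of_bool a - of_bool b :: real)^2 \<and> (of_bool a - of_bool b :: real)^2 \<le> 1"
  by (cases a; cases b) auto

lemma npow_le1: "n \<ge> 1 \<Longrightarrow> e \<le> 0 \<Longrightarrow> real n powr e \<le> 1"
  using powr_mono[of e 0 "real n"] by simp

lemma slow_small:
  assumes sg: "schwartz (glue Gm Gp)" and g2: "\<gamma> \<ge> 2" and a0: "\<alpha> > 0" and b0: "\<beta> \<ge> 0"
  shows "\<exists>K2\<ge>0. \<forall>n::nat. n \<ge> 1 \<longrightarrow> (\<forall>w::int\<Rightarrow>int\<Rightarrow>real. (\<forall>x y. 0 \<le> w x y \<and> w x y \<le> 1) \<longrightarrow>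
     (\<forall>F. finite F \<longrightarrow> F \<subseteq> {(x,y). x < y \<and> slow x y} \<longrightarrow>
       \<alpha> * Theta \<gamma> n * real n powr (-1-\<beta>) * (\<Sum>(x,y)\<in>F. pker \<gamma> (x - y) * (glue Gm Gp (real_of_int y / real n) - glue Gm Gp (real_of_int x / real n))^2 * w x y) \<le> K2))"
proof -
  obtain Kg where Kg: "\<forall>n::nat. n \<ge> 1 \<longrightarrow> (\<forall>F. finite F \<longrightarrow> F \<subseteq> {(x,y). x < y} \<longrightarrow>
     Theta \<gamma> n * (\<Sum>(x,y)\<in>F. pker \<gamma> (x - y) * (glue Gm Gp (real_of_int y / real n) - glue Gm Gp (real_of_int x / real n))^2) \<le> Kg * real n)"
    using core[OF sg g2] by blast
  show ?thesis
  proof (intro exI[of _ "\<alpha> * \<bar>Kg\<bar>"] conjI allI impI)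
    show "0 \<le> \<alpha> * \<bar>Kg\<bar>" using a0 by simp
    fix n :: nat and w :: "int \<Rightarrow> int \<Rightarrow> real" and F :: "(int \<times> int) set"
    assume n: "n \<ge> 1" and w: "\<forall>x y. 0 \<le> w x y \<and> w x y \<le> 1" and F: "finite F" and Fs: "F \<subseteq> {(x,y). x < y \<and> slow x y}"
    define S where "S = (\<Sum>(x,y)\<in>F. pker \<gamma> (x - y) * (glue Gm Gp (real_of_int y / real n) - glue Gm Gp (real_of_int x / real n))^2)"
    define Sw where "Sw = (\<Sum>(x,y)\<in>F. pker \<gamma> (x - y) * (glue Gm Gp (real_of_int y / real n) - glue Gm Gp (real_of_int x / real n))^2 * w x y)"
    have "Sw \<le> S" unfolding Sw_def S_def
    proof (rule sum_mono)
      fix p assume "p \<in> F"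
      obtain x y where p: "p = (x,y)" by (cases p)
      have "pker \<gamma> (x - y) * (glue Gm Gp (real_of_int y / real n) - glue Gm Gp (real_of_int x / real n))^2 * w x y
          \<le> pker \<gamma> (x - y) * (glue Gm Gp (real_of_int y / real n) - glue Gm Gp (real_of_int x / real n))^2 * 1"
        by (intro mult_left_mono mult_nonneg_nonneg pker_nonneg) (use w in auto)
      then show "(case p of (x,y) \<Rightarrow> pker \<gamma> (x - y) * (glue Gm Gp (real_of_int y / real n) - glue Gm Gp (real_of_int x / real n))^2 * w x y)
          \<le> (case p of (x,y) \<Rightarrow> pker \<gamma> (x - y) * (glue Gm Gp (real_of_int y / real n) - glue Gm Gp (real_of_int x / real n))^2)" using p by simp
    qed
    have Sw0: "0 \<le> Sw" unfolding Sw_def by (intro sum_nonneg) (auto intro!: mult_nonneg_nonneg pker_nonneg simp: w)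
    have Th: "0 \<le> Theta \<gamma> n" using Theta_le[OF n] by simp
    have TS: "Theta \<gamma> n * S \<le> Kg * real n" unfolding S_def using Kg n F Fs by blast
    have np: "0 \<le> real n powr (-1-\<beta>)" by simp
    have "\<alpha> * Theta \<gamma> n * real n powr (-1-\<beta>) * Sw = \<alpha> * real n powr (-1-\<beta>) * (Theta \<gamma> n * Sw)" by (simp add: mult_ac)
    also have "\<dots> \<le> \<alpha> * real n powr (-1-\<beta>) * (Kg * real n)"
    proof (rule mult_left_mono)
      show "Theta \<gamma> n * Sw \<le> Kg * real n" using mult_left_mono[OF \<open>Sw \<le> S\<close> Th] TS by linarith
    qed (use a0 np in simp)
    also have "\<dots> = \<alpha> * Kg * (real n powr (-1-\<beta>) * real n)" by (simp add: mult_ac)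
    also have "real n powr (-1-\<beta>) * real n = real n powr (-\<beta>)"
    proof -
      have "real n powr (-1-\<beta>) * real n powr 1 = real n powr (-1-\<beta>+1)" by (rule powr_add[symmetric])
      then show ?thesis using n by simp
    qed
    also have "\<alpha> * Kg * real n powr (-\<beta>) \<le> \<alpha> * \<bar>Kg\<bar> * 1"
    proof -
      have "Kg * real n powr (-\<beta>) \<le> \<bar>Kg\<bar> * real n powr (-\<beta>)" by (intro mult_right_mono) auto
      also have "\<dots> \<le> \<bar>Kg\<bar> * 1" by (intro mult_left_mono npow_le1 n) (use b0 in auto)
      finally show ?thesis using a0 by (simp add: mult.assoc)
    qed
    finally show "\<alpha> * Theta \<gamma> n * real n powr (-1-\<beta>) * (\<Sum>(x,y)\<in>F. pker \<gamma> (x - y) * (glue Gm Gp (real_of_int y / real n) - glue Gm Gp (real_of_int x / real n))^2 * w x y) \<le> \<alpha> * \<bar>Kg\<bar>"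
      unfolding Sw_def by simp
  qed
qed

lemma slow_large:
  assumes sm: "schwartz Gm" and sp: "schwartz Gp" and g2: "\<gamma> \<ge> 2" and a0: "\<alpha> > 0" and b1: "\<beta> \<ge> 1"
  shows "\<exists>K2\<ge>0. \<forall>n::nat. n \<ge> 1 \<longrightarrow> (\<forall>w::int\<Rightarrow>int\<Rightarrow>real. (\<forall>x y. 0 \<le> w x y \<and> w x y \<le> 1) \<longrightarrow>
     (\<forall>F. finite F \<longrightarrow> F \<subseteq> {(x,y). x < y \<and> slow x y} \<longrightarrow>
       \<alpha> * Theta \<gamma> n * real n powr (-1-\<beta>) * (\<Sum>(x,y)\<in>F. pker \<gamma> (x - y) * (glue Gm Gp (real_of_int y / real n) - glue Gm Gp (real_of_int x / real n))^2 * w x y) \<le> K2))"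
proof -
  obtain Dm where Dm: "Dm \<ge> 0" "\<forall>u. \<bar>Gm u\<bar> \<le> Dm/(1+u^2)" using schwartz_bounds[OF sm] by blast
  obtain Dp where Dp: "Dp \<ge> 0" "\<forall>u. \<bar>Gp u\<bar> \<le> Dp/(1+u^2)" using schwartz_bounds[OF sp] by blast
  define B where "B = Dm + Dp"
  have GB: "\<bar>glue Gm Gp u\<bar> \<le> B" for u
  proof -
    have d: "D/(1+u^2) \<le> D" if "D \<ge> 0" for D :: real
    proof -
      have "D/(1+u^2) \<le> D/1" using that by (intro divide_left_mono) (auto simp: add_pos_nonneg)
      then show ?thesis by simp
    qed
    show ?thesis unfolding glue_def B_def using Dm Dp d[of Dm] d[of Dp]
      by (auto intro: order_trans)
  qed
  define c where "c = c_gamma \<gamma>"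
  have c0: "c \<ge> 0" unfolding c_def by (rule c_gamma_nonneg)
  define \<theta> where "\<theta> = 1 + 1/ln (2::real)"
  have th0: "\<theta> \<ge> 0" unfolding \<theta>_def by (simp add: add_nonneg_nonneg)
  show ?thesis
  proof (intro exI[of _ "\<alpha> * \<theta> * (4*B^2) * (2*c)"] conjI allI impI)
    show "0 \<le> \<alpha> * \<theta> * (4*B^2) * (2*c)" using a0 th0 c0 by simp
    fix n :: nat and w :: "int \<Rightarrow> int \<Rightarrow> real" and F :: "(int \<times> int) set"
    assume n: "n \<ge> 1" and w: "\<forall>x y. 0 \<le> w x y \<and> w x y \<le> 1" and F: "finite F" and Fs: "F \<subseteq> {(x,y). x < y \<and> slow x y}"
    define Sw where "Sw = (\<Sum>(x,y)\<in>F. pker \<gamma> (x - y) * (glue Gm Gp (real_of_int y / real n) - glue Gm Gp (real_of_int x / real n))^2 * w x y)"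
    have "Sw \<le> (\<Sum>(x,y)\<in>F. pker \<gamma> (x - y) * (4*B^2))" unfolding Sw_def
    proof (rule sum_mono)
      fix p assume "p \<in> F"
      obtain x y where p: "p = (x,y)" by (cases p)
      have sq: "(glue Gm Gp (real_of_int y / real n) - glue Gm Gp (real_of_int x / real n))^2 \<le> 4*B^2"
      proof -
        have "\<bar>glue Gm Gp (real_of_int y / real n) - glue Gm Gp (real_of_int x / real n)\<bar> \<le> 2*B"
          using GB[of "real_of_int y / real n"] GB[of "real_of_int x / real n"] by linarith
        then have "\<bar>glue Gm Gp (real_of_int y / real n) - glue Gm Gp (real_of_int x / real n)\<bar>^2 \<le> (2*B)^2"
          by (intro power_mono) auto
        then show ?thesis by (simp add: power_mult_distrib)
      qed
      have "pker \<gamma> (x - y) * (glue Gm Gp (real_of_int y / real n) - glue Gm Gp (real_of_int x / real n))^2 * w x y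
          \<le> pker \<gamma> (x - y) * (glue Gm Gp (real_of_int y / real n) - glue Gm Gp (real_of_int x / real n))^2 * 1"
        by (intro mult_left_mono mult_nonneg_nonneg pker_nonneg) (use w in auto)
      also have "\<dots> \<le> pker \<gamma> (x - y) * (4*B^2)" using sq pker_nonneg by (simp add: mult_left_mono)
      finally show "(case p of (x,y) \<Rightarrow> pker \<gamma> (x - y) * (glue Gm Gp (real_of_int y / real n) - glue Gm Gp (real_of_int x / real n))^2 * w x y)
          \<le> (case p of (x,y) \<Rightarrow> pker \<gamma> (x - y) * (4*B^2))" using p by simp
    qed
    also have "\<dots> = (\<Sum>(x,y)\<in>F. pker \<gamma> (x - y)) * (4*B^2)" by (simp add: sum_distrib_right case_prod_unfold)
    also have "\<dots> \<le> (2*c) * (4*B^2)" unfolding c_def by (intro mult_right_mono slow_count g2 F Fs) simp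
    finally have SwB: "Sw \<le> (2*c) * (4*B^2)" .
    have Sw0: "0 \<le> Sw" unfolding Sw_def by (intro sum_nonneg) (auto intro!: mult_nonneg_nonneg pker_nonneg simp: w)
    have Th: "0 \<le> Theta \<gamma> n" "Theta \<gamma> n \<le> \<theta> * (real n)^2" using Theta_le[OF n] unfolding \<theta>_def by auto
    have np: "0 \<le> real n powr (-1-\<beta>)" by simp
    have "Theta \<gamma> n * real n powr (-1-\<beta>) \<le> \<theta> * (real n)^2 * real n powr (-1-\<beta>)"
      by (intro mult_right_mono Th np)
    also have "\<theta> * (real n)^2 * real n powr (-1-\<beta>) = \<theta> * real n powr (2 + (-1-\<beta>))"
    proof -
      have "(real n)^2 = real n powr 2" using n by (simp add: powr_numeral)
      moreover have "real n powr 2 * real n powr (-1-\<beta>) = real n powr (2 + (-1-\<beta>))" by (rule powr_add[symmetric])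
      ultimately show ?thesis by (simp add: mult.assoc)
    qed
    also have "\<dots> \<le> \<theta> * 1" by (intro mult_left_mono npow_le1 n th0) (use b1 in simp)
    finally have aB: "Theta \<gamma> n * real n powr (-1-\<beta>) \<le> \<theta>" by simp
    have "\<alpha> * Theta \<gamma> n * real n powr (-1-\<beta>) * Sw = \<alpha> * (Theta \<gamma> n * real n powr (-1-\<beta>)) * Sw" by (simp add: mult_ac)
    also have "\<dots> \<le> \<alpha> * \<theta> * ((2*c) * (4*B^2))"
      by (intro mult_mono mult_left_mono aB SwB Sw0) (use a0 th0 Th np in auto)
    finally show "\<alpha> * Theta \<gamma> n * real n powr (-1-\<beta>) * (\<Sum>(x,y)\<in>F. pker \<gamma> (x - y) * (glue Gm Gp (real_of_int y / real n) - glue Gm Gp (real_of_int x / real n))^2 * w x y) \<le> \<alpha> * \<theta> * (4*B^2) * (2*c)"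
      unfolding Sw_def by (simp add: mult_ac)
  qed
qed



theorem lemma3p7:
  fixes \<alpha> \<beta> \<gamma> b T :: real and Gm Gp :: "real \<Rightarrow> real"
  assumes "\<gamma> \<ge> 2" and "\<alpha> > 0" and "\<beta> \<ge> 0" and "0 < b" and "b < 1" and "T > 0"
    and "S_beta_gamma \<alpha> \<beta> \<gamma> Gm Gp"
  shows "\<exists>C>0. \<forall>n::nat. n \<ge> 1 \<longrightarrow>
           (\<forall>(M :: 'w measure) X. exclusion_process \<alpha> \<beta> \<gamma> b n M X \<longrightarrow>
              (\<forall>t\<in>{0..T}.
                 integral\<^sup>L M (\<lambda>\<omega>.
                   (qv \<alpha> \<beta> \<gamma> n (glue Gm Gp) (\<lambda>s. X \<omega> (s * Theta \<gamma> n)) t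
                    - integral\<^sup>L M (\<lambda>\<omega>'. qv \<alpha> \<beta> \<gamma> n (glue Gm Gp) (\<lambda>s. X \<omega>' (s * Theta \<gamma> n)) t))^2)
                 \<le> C))"
proof -
  have sch: "schwartz Gm" "schwartz Gp" using assms(7) unfolding S_beta_gamma_def S_Rob_def S_Neu_def
    by (auto split: if_splits)
  obtain Km where Km: "\<forall>n::nat. n \<ge> 1 \<longrightarrow> (\<forall>F. finite F \<longrightarrow> F \<subseteq> {(x,y). x < y} \<longrightarrow>
     Theta \<gamma> n * (\<Sum>(x,y)\<in>F. pker \<gamma> (x - y) * (Gm (real_of_int y / real n) - Gm (real_of_int x / real n))^2) \<le> Km * real n)"
    using core[OF sch(1) assms(1)] by blast
  obtain Kp where Kp: "\<forall>n::nat. n \<ge> 1 \<longrightarrow> (\<forall>F. finite F \<longrightarrow> F \<subseteq> {(x,y). x < y} \<longrightarrow>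
     Theta \<gamma> n * (\<Sum>(x,y)\<in>F. pker \<gamma> (x - y) * (Gp (real_of_int y / real n) - Gp (real_of_int x / real n))^2) \<le> Kp * real n)"
    using core[OF sch(2) assms(1)] by blast
  have ex: "\<exists>K2\<ge>0. \<forall>n::nat. n \<ge> 1 \<longrightarrow> (\<forall>w::int\<Rightarrow>int\<Rightarrow>real. (\<forall>x y. 0 \<le> w x y \<and> w x y \<le> 1) \<longrightarrow>
     (\<forall>F. finite F \<longrightarrow> F \<subseteq> {(x,y). x < y \<and> slow x y} \<longrightarrow>
       \<alpha> * Theta \<gamma> n * real n powr (-1-\<beta>) * (\<Sum>(x,y)\<in>F. pker \<gamma> (x - y) * (glue Gm Gp (real_of_int y / real n) - glue Gm Gp (real_of_int x / real n))^2 * w x y) \<le> K2))"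
  proof (cases "\<beta> < 1")
    case True
    then have "schwartz (glue Gm Gp)" using assms(7) unfolding S_beta_gamma_def by simp
    then show ?thesis by (rule slow_small[OF _ assms(1,2,3)])
  next
    case False
    then have "\<beta> \<ge> 1" by simp
    then show ?thesis by (rule slow_large[OF sch assms(1,2)])
  qed
  then obtain K2 where K20: "K2 \<ge> 0" and K2: "\<forall>n::nat. n \<ge> 1 \<longrightarrow> (\<forall>w::int\<Rightarrow>int\<Rightarrow>real. (\<forall>x y. 0 \<le> w x y \<and> w x y \<le> 1) \<longrightarrow>
     (\<forall>F. finite F \<longrightarrow> F \<subseteq> {(x,y). x < y \<and> slow x y} \<longrightarrow>
       \<alpha> * Theta \<gamma> n * real n powr (-1-\<beta>) * (\<Sum>(x,y)\<in>F. pker \<gamma> (x - y) * (glue Gm Gp (real_of_int y / real n) - glue Gm Gp (real_of_int x / real n))^2 * w x y) \<le> K2))"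
    by (elim exE conjE)
  define K1 where "K1 = \<bar>Km\<bar> + \<bar>Kp\<bar>"
  have K10: "K1 \<ge> 0" unfolding K1_def by simp
  define Qb where "Qb = (K1 + K2) * T"
  have Qb0: "Qb \<ge> 0" unfolding Qb_def using K10 K20 assms(6) by simp
  show ?thesis
  proof (intro exI[of _ "4 * Qb^2 + 1"] conjI allI impI ballI)
    show "0 < 4 * Qb^2 + 1" by (simp add: add_nonneg_pos)
    fix n :: nat and M :: "'w measure" and X t
    assume n: "n \<ge> 1" and ep: "exclusion_process \<alpha> \<beta> \<gamma> b n M X" and t: "t \<in> {0..T}"
    have ps: "prob_space M" using ep unfolding exclusion_process_def by blast
    have t0: "0 \<le> t" and tT: "t \<le> T" using t by auto
    have Th: "0 \<le> Theta \<gamma> n" using Theta_le[OF n] by simp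
    have qvb: "\<bar>qv \<alpha> \<beta> \<gamma> n (glue Gm Gp) eta t\<bar> \<le> Qb" for eta :: "real \<Rightarrow> int \<Rightarrow> bool"
    proof -
      define f1 where "f1 = (\<lambda>s. Theta \<gamma> n / real n *
        infsum (\<lambda>(x,y). pker \<gamma> (x - y) * (glue Gm Gp (real_of_int y / real n) - glue Gm Gp (real_of_int x / real n))^2
                          * (of_bool (eta s y) - of_bool (eta s x))^2) {(x,y). x < y \<and> \<not> slow x y})"
      define f2 where "f2 = (\<lambda>s. \<alpha> * Theta \<gamma> n * real n powr (-1 - \<beta>) *
        infsum (\<lambda>(x,y). pker \<gamma> (x - y) * (glue Gm Gp (real_of_int y / real n) - glue Gm Gp (real_of_int x / real n))^2
                          * (of_bool (eta s y) - of_bool (eta s x))^2) {(x,y). x < y \<and> slow x y})"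
      have q: "qv \<alpha> \<beta> \<gamma> n (glue Gm Gp) eta t = set_lebesgue_integral lborel {0..t} f1 + set_lebesgue_integral lborel {0..t} f2"
        unfolding qv_def f1_def f2_def ..
      have f1b: "0 \<le> f1 s \<and> f1 s \<le> K1" for s
        unfolding f1_def
      proof (rule infsum_scaled_bound)
        show "0 \<le> Theta \<gamma> n / real n" using Th by simp
        show "0 \<le> K1" by (rule K10)
        show "0 \<le> (case p of (x,y) \<Rightarrow> pker \<gamma> (x - y) * (glue Gm Gp (real_of_int y / real n) - glue Gm Gp (real_of_int x / real n))^2
                          * (of_bool (eta s y) - of_bool (eta s x))^2)" for p
          by (auto simp: pker_nonneg split: prod.splits)
        fix F :: "(int \<times> int) set" assume F: "finite F" and Fs: "F \<subseteq> {(x,y). x < y \<and> \<not> slow x y}"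
        have "Theta \<gamma> n / real n * (\<Sum>(x,y)\<in>F. pker \<gamma> (x - y) * (glue Gm Gp (real_of_int y / real n) - glue Gm Gp (real_of_int x / real n))^2
                          * (\<lambda>x y. (of_bool (eta s y) - of_bool (eta s x) :: real)^2) x y) \<le> Km + Kp"
          by (rule ns_bound[where w = "\<lambda>x y. (of_bool (eta s y) - of_bool (eta s x) :: real)^2", OF _ _ n F Fs _ Th],
              (rule Km[rule_format, OF n], assumption+), (rule Kp[rule_format, OF n], assumption+), rule w_bound)
        then show "Theta \<gamma> n / real n * (\<Sum>(x,y)\<in>F. pker \<gamma> (x - y) * (glue Gm Gp (real_of_int y / real n) - glue Gm Gp (real_of_int x / real n))^2
                          * (of_bool (eta s y) - of_bool (eta s x))^2) \<le> K1"
          unfolding K1_def by simp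
      qed
      have f2b: "0 \<le> f2 s \<and> f2 s \<le> K2" for s
        unfolding f2_def
      proof (rule infsum_scaled_bound)
        show "0 \<le> \<alpha> * Theta \<gamma> n * real n powr (-1 - \<beta>)" using Th assms(2) by simp
        show "0 \<le> K2" by (rule K20)
        show "0 \<le> (case p of (x,y) \<Rightarrow> pker \<gamma> (x - y) * (glue Gm Gp (real_of_int y / real n) - glue Gm Gp (real_of_int x / real n))^2
                          * (of_bool (eta s y) - of_bool (eta s x))^2)" for p
          by (auto simp: pker_nonneg split: prod.splits)
        fix F :: "(int \<times> int) set" assume F: "finite F" and Fs: "F \<subseteq> {(x,y). x < y \<and> slow x y}"
        have "\<forall>x y. 0 \<le> (\<lambda>x y. (of_bool (eta s y) - of_bool (eta s x) :: real)^2) x y \<and> (\<lambda>x y. (of_bool (eta s y) - of_bool (eta s x) :: real)^2) x y \<le> 1"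
          using w_bound by simp
        then have "\<alpha> * Theta \<gamma> n * real n powr (-1-\<beta>) * (\<Sum>(x,y)\<in>F. pker \<gamma> (x - y) * (glue Gm Gp (real_of_int y / real n) - glue Gm Gp (real_of_int x / real n))^2
                          * (\<lambda>x y. (of_bool (eta s y) - of_bool (eta s x) :: real)^2) x y) \<le> K2"
          using K2[rule_format, of n "\<lambda>x y. (of_bool (eta s y) - of_bool (eta s x) :: real)^2" F] n F Fs w_bound by simp
        then show "\<alpha> * Theta \<gamma> n * real n powr (-1 - \<beta>) * (\<Sum>(x,y)\<in>F. pker \<gamma> (x - y) * (glue Gm Gp (real_of_int y / real n) - glue Gm Gp (real_of_int x / real n))^2
                          * (of_bool (eta s y) - of_bool (eta s x))^2) \<le> K2"
          by simp
      qed
      have i1: "\<bar>set_lebesgue_integral lborel {0..t} f1\<bar> \<le> K1 * t"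
        by (rule set_int_bound) (use f1b t0 in auto)
      have i2: "\<bar>set_lebesgue_integral lborel {0..t} f2\<bar> \<le> K2 * t"
        by (rule set_int_bound) (use f2b t0 in auto)
      have "(K1 + K2) * t \<le> (K1 + K2) * T" using tT K10 K20 by (intro mult_left_mono) auto
      then show ?thesis unfolding q Qb_def using i1 i2 by (simp add: algebra_simps)
    qed
    define Q where "Q = (\<lambda>\<omega>. qv \<alpha> \<beta> \<gamma> n (glue Gm Gp) (\<lambda>s. X \<omega> (s * Theta \<gamma> n)) t)"
    have EQ: "\<bar>integral\<^sup>L M Q\<bar> \<le> Qb" by (rule prob_int_abs_bound[OF ps _ Qb0]) (simp add: Q_def qvb)
    have "\<bar>(Q \<omega> - integral\<^sup>L M Q)^2\<bar> \<le> 4 * Qb^2" for \<omega>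
    proof -
      have "\<bar>Q \<omega> - integral\<^sup>L M Q\<bar> \<le> 2 * Qb" using qvb EQ unfolding Q_def by (smt (verit))
      then have "\<bar>Q \<omega> - integral\<^sup>L M Q\<bar>^2 \<le> (2 * Qb)^2" by (intro power_mono) auto
      then show ?thesis by (simp add: power_mult_distrib)
    qed
    then have "\<bar>integral\<^sup>L M (\<lambda>\<omega>. (Q \<omega> - integral\<^sup>L M Q)^2)\<bar> \<le> 4 * Qb^2"
      by (intro prob_int_abs_bound[OF ps]) auto
    then show "integral\<^sup>L M (\<lambda>\<omega>.
                   (qv \<alpha> \<beta> \<gamma> n (glue Gm Gp) (\<lambda>s. X \<omega> (s * Theta \<gamma> n)) t
                    - integral\<^sup>L M (\<lambda>\<omega>'. qv \<alpha> \<beta> \<gamma> n (glue Gm Gp) (\<lambda>s. X \<omega>' (s * Theta \<gamma> n)) t))^2)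
                 \<le> 4 * Qb^2 + 1"
      unfolding Q_def by linarith
  qed
qed

end
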